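(* Let $f:\{0,1\}^n\to\{0,1\}^m$ be a Boolean function and let $r$ be the dimension of the affine span of $\operatorname{img}(f)$ in $\mathbb{F}_2^m$. Then $f$ is fully balanced if and only if $b(f)=2^r-1$.
   Context: Strings in $\{0,1\}^k$ are identified with vectors of $\mathbb{F}_2^k$; $\mathbf{a}\cdot\mathbf{b}=\bigoplus_i a_ib_i$ (mod 2). $f$ is $\mathbf{y}$-balanced if $f(\mathbf{x})\cdot\mathbf{y}=0$ for exactly half of the $\mathbf{x}\in\{0,1\}^n$ and $=1$ for the other half, and $\mathbf{y}$-constant if $f(\mathbf{x})\cdot\mathbf{y}$ is the same for all $\mathbf{x}$. $f$ is fully balanced if for every $\mathbf{y}\in\{0,1\}^m$ it is either $\mathbf{y}$-balanced or $\mathbf{y}$-constant. $C(f)=\{\mathbf{y}: f\text{ is }\mathbf{y}\text{-constant}\}$, $B(f)=\{\mathbf{y}: f\text{ is }\mathbf{y}\text{-balanced}\}$, and $b(f)=\#B(f)/\#C(f)$. *)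

theory Defs
  imports "HOL-Analysis.Analysis" "HOL-Library.Z2"
begin

text \<open>Strings in {0,1}^k are vectors in F_2^k, modelled as bit ^ 'k
  (bit is the two-element field from HOL-Library.Z2).\<close>

definition dotF2 :: "bit ^ 'k \<Rightarrow> bit ^ 'k \<Rightarrow> bit" where
  "dotF2 a b = (\<Sum>i\<in>UNIV. a $ i * b $ i)"

definition y_balanced :: "(bit ^ 'n \<Rightarrow> bit ^ 'm) \<Rightarrow> bit ^ 'm \<Rightarrow> bool" where
  "y_balanced f y \<longleftrightarrow>
     2 * card {x. dotF2 (f x) y = 0} = card (UNIV :: (bit ^ 'n) set) \<and>
     2 * card {x. dotF2 (f x) y = 1} = card (UNIV :: (bit ^ 'n) set)"

definition y_constant :: "(bit ^ 'n \<Rightarrow> bit ^ 'm) \<Rightarrow> bit ^ 'm \<Rightarrow> bool" where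
  "y_constant f y \<longleftrightarrow> (\<forall>x x'. dotF2 (f x) y = dotF2 (f x') y)"

definition fully_balanced :: "(bit ^ 'n \<Rightarrow> bit ^ 'm) \<Rightarrow> bool" where
  "fully_balanced f \<longleftrightarrow> (\<forall>y. y_balanced f y \<or> y_constant f y)"

definition Cset :: "(bit ^ 'n \<Rightarrow> bit ^ 'm) \<Rightarrow> (bit ^ 'm) set" where
  "Cset f = {y. y_constant f y}"

definition Bset :: "(bit ^ 'n \<Rightarrow> bit ^ 'm) \<Rightarrow> (bit ^ 'm) set" where
  "Bset f = {y. y_balanced f y}"

definition bratio :: "(bit ^ 'n \<Rightarrow> bit ^ 'm) \<Rightarrow> real" where
  "bratio f = real (card (Bset f)) / real (card (Cset f))"

text \<open>Dimension of the affine span of a nonempty set S over F_2: the dimension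
  of its direction space, i.e. the linear span of the S - s0 for a point s0 in S.\<close>
definition aff_dim_F2 :: "(bit ^ 'm) set \<Rightarrow> nat" where
  "aff_dim_F2 S = (let s0 = (SOME s. s \<in> S) in vec.dim ((\<lambda>s. s - s0) ` S))"

end

theory Submission
  imports Defs
begin

lemma card_bit: "CARD(bit) = 2"
proof -
  have "(UNIV::bit set) = {0,1}" by (auto)
  moreover have "card {0::bit,1} = 2" by simp
  ultimately show ?thesis by metis
qed

lemma fin_bit: "finite (UNIV :: bit set)"
proof -
  have "(UNIV::bit set) = {0,1}" by auto
  then show ?thesis by (metis finite.emptyI finite_insert)
qed

lemma fin_vec: "finite (UNIV :: (bit^'k) set)"
proof -
  have "finite (PiE (UNIV::'k set) (\<lambda>_. UNIV::bit set))" by (rule finite_PiE) (auto simp: fin_bit)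
  moreover have "PiE UNIV (\<lambda>_. UNIV) = (UNIV :: ('k \<Rightarrow> bit) set)" by (auto simp: PiE_def extensional_def)
  ultimately have "finite (UNIV :: ('k\<Rightarrow>bit) set)" by simp
  then have "finite (range vec_lambda :: (bit^'k) set)" by simp
  moreover have "range vec_lambda = (UNIV :: (bit^'k) set)"
    by (metis surj_def vec_lambda_eta)
  ultimately show ?thesis by simp
qed

lemma dot_add: "dotF2 (a + b) y = dotF2 a y + dotF2 b y"
  unfolding dotF2_def by (simp only: vector_add_component distrib_right sum.distrib)
lemma dot_scale: "dotF2 (c *s a) y = c * dotF2 a y"
  unfolding dotF2_def by (simp only: vector_smult_component sum_distrib_left mult.assoc)
lemma dot_diff: "dotF2 (a - b) y = dotF2 a y - dotF2 b y"
  unfolding dotF2_def by (simp only: vector_minus_component left_diff_distrib sum_subtractf)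
lemma dot_add2: "dotF2 a (y + z) = dotF2 a y + dotF2 a z"
  unfolding dotF2_def by (simp only: vector_add_component distrib_left sum.distrib)
lemma dot_diff2: "dotF2 a (y - z) = dotF2 a y - dotF2 a z"
  unfolding dotF2_def by (simp only: vector_minus_component right_diff_distrib sum_subtractf)
lemma dot_zero2: "dotF2 a 0 = 0"
  by (simp add: dotF2_def)

lemma lin_dot: "Vector_Spaces.linear ((*s) :: bit \<Rightarrow> bit^'m \<Rightarrow> bit^'m) (*) (\<lambda>v. dotF2 v y)"
  unfolding Vector_Spaces.linear_iff
  by (simp add: dot_add dot_scale vec.vector_space_axioms vector_space_over_itself.vector_space_axioms del: mult_bit_eq_and)

lemma pair: "vector_space_pair ((*s) :: bit \<Rightarrow> bit^'m \<Rightarrow> bit^'m) ((*) :: bit \<Rightarrow> bit \<Rightarrow> bit)"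
  unfolding vector_space_pair_def
  by (simp add: vec.vector_space_axioms vector_space_over_itself.vector_space_axioms del: mult_bit_eq_and)

lemma dot_axis: "dotF2 (axis i 1) y = y $ i"
proof -
  have "dotF2 (axis i 1) y = (\<Sum>j\<in>UNIV. if j = i then y $ i else 0)"
    unfolding dotF2_def by (intro sum.cong) (auto simp: axis_def)
  then show ?thesis by simp
qed

lemma functional_is_dot:
  assumes "Vector_Spaces.linear ((*s) :: bit \<Rightarrow> bit^'m \<Rightarrow> bit^'m) (*) phi"
  shows "\<exists>y. \<forall>v. phi v = dotF2 v y"
proof (intro exI allI)
  fix v :: "bit^'m"
  let ?y = "\<chi> i. phi (axis i 1)"
  show "phi v = dotF2 v ?y"
    apply (rule vector_space_pair.linear_eq_on[OF pair assms lin_dot, of v cart_basis])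
     apply simp
    apply (auto simp: cart_basis_def dot_axis)
    done
qed

lemma extend_dot:
  assumes "vec.independent (B :: (bit^'m) set)"
  shows "\<exists>y. \<forall>b\<in>B. dotF2 b y = g b"
proof -
  let ?phi = "vector_space_pair.construct ((*s) :: bit \<Rightarrow> bit^'m \<Rightarrow> bit^'m) ((*) :: bit \<Rightarrow> bit \<Rightarrow> bit) B g"
  have lin: "Vector_Spaces.linear ((*s) :: bit \<Rightarrow> bit^'m \<Rightarrow> bit^'m) (*) ?phi"
    by (rule vector_space_pair.linear_construct[OF pair assms])
  have bas: "\<forall>b\<in>B. ?phi b = g b"
    using vector_space_pair.construct_basis[OF pair assms] by blast
  obtain y where "\<forall>v. ?phi v = dotF2 v y" using functional_is_dot[OF lin] by blast
  then show ?thesis using bas by metis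
qed

lemma count_kernel:
  assumes ind: "vec.independent (B :: (bit^'m) set)"
  shows "card (UNIV :: (bit^'m) set) = card {y. \<forall>b\<in>B. dotF2 b y = 0} * 2 ^ card B"
proof -
  have fin: "finite B" using vec.finiteI_independent[OF ind] .
  define L where "L y = restrict (\<lambda>b. dotF2 b y) B" for y :: "bit^'m"
  define K where "K = {y :: bit^'m. \<forall>b\<in>B. dotF2 b y = 0}"
  have img: "range L = PiE B (\<lambda>_. UNIV)"
  proof
    show "range L \<subseteq> PiE B (\<lambda>_. UNIV)" by (auto simp: L_def)
    show "PiE B (\<lambda>_. UNIV) \<subseteq> range L"
    proof
      fix g assume g: "g \<in> PiE B (\<lambda>_. (UNIV :: bit set))"
      obtain y where y: "\<forall>b\<in>B. dotF2 b y = g b" using extend_dot[OF ind] by blast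
      have "L y = g"
        using g y by (auto simp: L_def PiE_def extensional_def restrict_def fun_eq_iff)
      then show "g \<in> range L" by blast
    qed
  qed
  have cimg: "card (range L) = 2 ^ card B"
    using img card_PiE[OF fin, of "\<lambda>_. (UNIV :: bit set)"] by (simp add: card_bit)
  have fib: "card (L -` {u}) = card K" if uL: "u \<in> range L" for u
  proof -
    obtain y0 where u: "u = L y0" using uL by blast
    have eq: "L -` {u} = (\<lambda>c. c + y0) ` K"
    proof
      show "L -` {u} \<subseteq> (\<lambda>c. c + y0) ` K"
      proof
        fix y assume "y \<in> L -` {u}"
        then have "L y = L y0" using u by simp
        then have "\<forall>b\<in>B. dotF2 b y = dotF2 b y0" unfolding L_def by (metis restrict_apply')
        then have "y - y0 \<in> K" by (simp add: K_def dot_diff2)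
        moreover have "y = (y - y0) + y0" by simp
        ultimately show "y \<in> (\<lambda>c. c + y0) ` K" by blast
      qed
      show "(\<lambda>c. c + y0) ` K \<subseteq> L -` {u}"
      proof
        fix y assume "y \<in> (\<lambda>c. c + y0) ` K"
        then obtain c where c: "c \<in> K" "y = c + y0" by blast
        have "\<forall>b\<in>B. dotF2 b y = dotF2 b y0"
          using c by (simp add: K_def dot_add2 del: add_bit_eq_xor)
        then have "L y = L y0" unfolding L_def by (intro restrict_ext) simp
        then show "y \<in> L -` {u}" using u by simp
      qed
    qed
    have "inj_on (\<lambda>c. c + y0) K" by (auto simp: inj_on_def)
    then show ?thesis using eq card_image by metis
  qed
  have "UNIV = (\<Union>u\<in>range L. L -` {u})" by auto
  then have "card (UNIV :: (bit^'m) set) = card (\<Union>u\<in>range L. L -` {u})" by simp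
  also have "\<dots> = (\<Sum>u\<in>range L. card (L -` {u}))"
    by (rule card_UN_disjoint) (auto intro: finite_subset[OF _ fin_vec])
  also have "\<dots> = (\<Sum>u\<in>range L. card K)" using fib by simp
  also have "\<dots> = card K * 2 ^ card B" using cimg by simp
  finally show ?thesis by (simp add: K_def)
qed

lemma lin_zero: "Vector_Spaces.linear ((*s) :: bit \<Rightarrow> bit^'m \<Rightarrow> bit^'m) ((*) :: bit \<Rightarrow> bit \<Rightarrow> bit) (\<lambda>v. 0)"
  unfolding Vector_Spaces.linear_iff
  by (simp add: vec.vector_space_axioms vector_space_over_itself.vector_space_axioms del: mult_bit_eq_and)

lemma const_char:
  fixes f :: "bit ^ 'n \<Rightarrow> bit ^ 'm"
  assumes s0: "s0 \<in> range f" and BD: "B \<subseteq> (\<lambda>s. s - s0) ` range f"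
    and DB: "(\<lambda>s. s - s0) ` range f \<subseteq> vec.span B"
  shows "y_constant f y \<longleftrightarrow> (\<forall>b\<in>B. dotF2 b y = 0)"
proof
  assume c: "y_constant f y"
  show "\<forall>b\<in>B. dotF2 b y = 0"
  proof
    fix b assume "b \<in> B"
    then obtain x where b: "b = f x - s0" using BD by blast
    obtain x0 where "s0 = f x0" using s0 by blast
    then show "dotF2 b y = 0" using c b by (metis y_constant_def dot_diff diff_self)
  qed
next
  assume z: "\<forall>b\<in>B. dotF2 b y = 0"
  have d0: "dotF2 (f x - s0) y = 0" for x
    using vector_space_pair.linear_eq_on[OF pair lin_dot lin_zero, of "f x - s0" B y] DB z by blast
  show "y_constant f y"
    unfolding y_constant_def
  proof (intro allI)
    fix x x'
    have "dotF2 (f x) y = dotF2 s0 y" using d0[of x] dot_diff by (metis right_minus_eq)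
    moreover have "dotF2 (f x') y = dotF2 s0 y" using d0[of x'] dot_diff by (metis right_minus_eq)
    ultimately show "dotF2 (f x) y = dotF2 (f x') y" by simp
  qed
qed

lemma card_C:
  fixes f :: "bit ^ 'n \<Rightarrow> bit ^ 'm"
  shows "card (UNIV :: (bit^'m) set) = card (Cset f) * 2 ^ aff_dim_F2 (range f)"
proof -
  define s0 where "s0 = (SOME s. s \<in> range f)"
  have s0: "s0 \<in> range f" unfolding s0_def by (rule someI) blast
  define D where "D = (\<lambda>s. s - s0) ` range f"
  obtain B where BD: "B \<subseteq> D" and ind: "vec.independent B" and DB: "D \<subseteq> vec.span B"
    by (rule vec.maximal_independent_subset)
  have r: "aff_dim_F2 (range f) = card B"
    unfolding aff_dim_F2_def Let_def s0_def[symmetric] D_def[symmetric]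
    using vec.basis_card_eq_dim[OF BD DB ind] by simp
  have "Cset f = {y. \<forall>b\<in>B. dotF2 b y = 0}"
    unfolding Cset_def using const_char[OF s0, of B] BD DB by (auto simp: D_def)
  then show ?thesis using count_kernel[OF ind] r by simp
qed

lemma aux_real: "(c::real) \<noteq> 0 \<Longrightarrow> (a + c = c * p) = (a / c = p - 1)"
proof -
  assume c: "c \<noteq> 0"
  have "(a / c = p - 1) = (a = (p - 1) * c)" using c by (rule nonzero_divide_eq_eq)
  also have "\<dots> = (a + c = c * p)" by (auto simp: algebra_simps)
  finally show ?thesis by simp
qed

theorem mainTheorem6:
  fixes f :: "bit ^ 'n \<Rightarrow> bit ^ 'm"
  shows "fully_balanced f \<longleftrightarrow> bratio f = 2 ^ aff_dim_F2 (range f) - 1"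
proof -
  define M where "M = card (UNIV :: (bit^'m) set)"
  define r where "r = aff_dim_F2 (range f)"
  have cnt: "M = card (Cset f) * 2 ^ r" unfolding M_def r_def by (rule card_C)
  have Mpos: "M > 0" unfolding M_def using fin_vec by (metis card_gt_0_iff UNIV_not_empty)
  have Npos: "card (UNIV :: (bit^'n) set) > 0" using fin_vec by (metis card_gt_0_iff UNIV_not_empty)
  have Cpos: "card (Cset f) > 0" using cnt Mpos by (metis gr0I mult_0)
  have disj: "Bset f \<inter> Cset f = {}"
  proof (rule ccontr)
    assume "Bset f \<inter> Cset f \<noteq> {}"
    then obtain y where b: "y_balanced f y" and c: "y_constant f y"
      by (auto simp: Bset_def Cset_def)
    obtain x0 :: "bit^'n" where x0: True by simp
    show False
    proof (cases "dotF2 (f x0) y = 0")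
      case True
      then have "{x. dotF2 (f x) y = 0} = UNIV" using c unfolding y_constant_def by (metis (mono_tags) UNIV_eq_I mem_Collect_eq)
      then show False using b Npos by (simp add: y_balanced_def)
    next
      case False
      then have "{x. dotF2 (f x) y = 0} = {}" using c by (auto simp: y_constant_def) (metis)
      then show False using b Npos by (simp add: y_balanced_def)
    qed
  qed
  have finB: "finite (Bset f)" and finC: "finite (Cset f)" using finite_subset[OF subset_UNIV fin_vec] by auto
  have cardU: "card (Bset f \<union> Cset f) = card (Bset f) + card (Cset f)"
    using card_Un_disjoint[OF finB finC] disj by simp
  have "fully_balanced f \<longleftrightarrow> Bset f \<union> Cset f = UNIV"
    by (auto simp: fully_balanced_def Bset_def Cset_def)
  also have "\<dots> \<longleftrightarrow> card (Bset f) + card (Cset f) = M"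
  proof
    assume "Bset f \<union> Cset f = UNIV" then show "card (Bset f) + card (Cset f) = M"
      using cardU M_def by simp
  next
    assume "card (Bset f) + card (Cset f) = M"
    then show "Bset f \<union> Cset f = UNIV"
      using card_subset_eq[OF fin_vec, of "Bset f \<union> Cset f"] cardU M_def by simp
  qed
  also have "\<dots> \<longleftrightarrow> real (card (Bset f)) + real (card (Cset f)) = real (card (Cset f)) * 2 ^ r"
  proof -
    have "real (card (Bset f) + card (Cset f)) = real (card (Bset f)) + real (card (Cset f))" by simp
    moreover have "real M = real (card (Cset f)) * 2 ^ r" unfolding cnt by simp
    ultimately show ?thesis by (metis of_nat_eq_iff)
  qed
  also have "\<dots> \<longleftrightarrow> bratio f = 2 ^ r - 1"
  proof -
    have cz: "real (card (Cset f)) \<noteq> 0" using Cpos by simp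
    show ?thesis unfolding bratio_def using cz
      by (rule aux_real)
  qed
  finally show ?thesis unfolding r_def .
qed

end
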